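(* For every uniform discrete traffic crossing instance on the torus with congestion $\chi$, the worst-case asymptotic delay rate of an optimal scheduler satisfies $\rho_{opt}\ge \chi/(1+\chi)$.
   Context: Setting: a $W\times W$ square region $R$ of the integer grid, $W$ even, is embedded on a torus (a vehicle leaving $R$ on one side reappears instantly in the same lane on the opposite side). There are $m_x$ vertical lanes (vertical grid lines) and $m_y$ horizontal lanes, each assigned a direction. Vehicles occupy grid points on lanes and move along their lane in its direction; time is discrete, and at each step each vehicle either advances one unit or stays; a collision occurs if two vehicles occupy the same grid point at the same time. Intersections are crossing points of a horizontal and a vertical lane. The instance is uniform if every lane contains the same number $n'$ of vehicles (initial positions within lanes arbitrary); $p=n'/W$ is the density and $\chi=\max(0,2p-1)$ is the congestion. A vehicle experiences a delay at time $t$ if it does not move at that step; the delay rate of a collision-free schedule at time $t$ is the maximum (over vehicles) total delay up to time $t$ divided by $t$, and its asymptotic delay rate is the limit superior of the delay rate as $t\to\infty$. $\rho_{opt}=\rho_{opt}(W,p,m_x,m_y)$ denotes the worst-case (over uniform instances of this form) asymptotic delay rate achieved by an optimum (collision-free) scheduler. *)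

theory Defs
  imports "HOL-Analysis.Analysis"
begin

text \<open>A vehicle is a pair (lane, k) with k < n', n' the number of vehicles per lane.
  Grid points of the torus are pairs of integers in {0..<W}.\<close>

datatype lane = VL nat | HL nat

type_synonym vehicle = "lane \<times> nat"

record traffic_inst =
  vx   :: "nat \<Rightarrow> nat"       \<comment> \<open>x-coordinate of vertical lane i\<close>
  dirV :: "nat \<Rightarrow> bool"      \<comment> \<open>True: moves towards increasing y\<close>
  hy   :: "nat \<Rightarrow> nat"       \<comment> \<open>y-coordinate of horizontal lane j\<close>
  dirH :: "nat \<Rightarrow> bool"      \<comment> \<open>True: moves towards increasing x\<close>
  pos0 :: "vehicle \<Rightarrow> nat"   \<comment> \<open>initial coordinate along the lane\<close>

definition vehicles :: "nat \<Rightarrow> nat \<Rightarrow> nat \<Rightarrow> vehicle set" where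
  "vehicles mx my n = ({VL i | i. i < mx} \<union> {HL j | j. j < my}) \<times> {..<n}"

definition lane_sign :: "traffic_inst \<Rightarrow> lane \<Rightarrow> int" where
  "lane_sign I l = (case l of VL i \<Rightarrow> (if dirV I i then 1 else -1)
                            | HL j \<Rightarrow> (if dirH I j then 1 else -1))"

definition gridpt :: "nat \<Rightarrow> traffic_inst \<Rightarrow> vehicle \<Rightarrow> nat \<Rightarrow> int \<times> int" where
  "gridpt W I v d =
     (let c = (int (pos0 I v) + lane_sign I (fst v) * int d) mod int W in
      case fst v of VL i \<Rightarrow> (int (vx I i), c) | HL j \<Rightarrow> (c, int (hy I j)))"

definition uniform_instance :: "nat \<Rightarrow> nat \<Rightarrow> nat \<Rightarrow> nat \<Rightarrow> traffic_inst \<Rightarrow> bool" where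
  "uniform_instance W mx my n I \<longleftrightarrow>
     (\<forall>i<mx. vx I i < W) \<and> inj_on (vx I) {..<mx} \<and>
     (\<forall>j<my. hy I j < W) \<and> inj_on (hy I) {..<my} \<and>
     (\<forall>v\<in>vehicles mx my n. pos0 I v < W) \<and>
     inj_on (\<lambda>v. gridpt W I v 0) (vehicles mx my n)"

text \<open>A schedule says, for each vehicle and each step t (from time t to t+1),
  whether the vehicle advances one unit.\<close>
type_synonym schedule = "vehicle \<Rightarrow> nat \<Rightarrow> bool"

definition travelled :: "schedule \<Rightarrow> vehicle \<Rightarrow> nat \<Rightarrow> nat" where
  "travelled \<sigma> v t = card {s. s < t \<and> \<sigma> v s}"

definition collision_free :: "nat \<Rightarrow> nat \<Rightarrow> nat \<Rightarrow> nat \<Rightarrow> traffic_inst \<Rightarrow> schedule \<Rightarrow> bool" where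
  "collision_free W mx my n I \<sigma> \<longleftrightarrow>
     (\<forall>t. inj_on (\<lambda>v. gridpt W I v (travelled \<sigma> v t)) (vehicles mx my n))"

definition max_delay :: "nat \<Rightarrow> nat \<Rightarrow> nat \<Rightarrow> schedule \<Rightarrow> nat \<Rightarrow> nat" where
  "max_delay mx my n \<sigma> t = Max (insert 0 ((\<lambda>v. t - travelled \<sigma> v t) ` vehicles mx my n))"

definition asym_delay_rate :: "nat \<Rightarrow> nat \<Rightarrow> nat \<Rightarrow> schedule \<Rightarrow> ereal" where
  "asym_delay_rate mx my n \<sigma> =
     limsup (\<lambda>t. ereal (real (max_delay mx my n \<sigma> t) / real t))"

definition rho_opt :: "nat \<Rightarrow> nat \<Rightarrow> nat \<Rightarrow> nat \<Rightarrow> ereal" where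
  "rho_opt W n mx my =
     (SUP I \<in> {I. uniform_instance W mx my n I}.
        INF \<sigma> \<in> {\<sigma>. collision_free W mx my n I \<sigma>}. asym_delay_rate mx my n \<sigma>)"

definition density :: "nat \<Rightarrow> nat \<Rightarrow> real" where
  "density W n = real n / real W"

definition congestion :: "nat \<Rightarrow> nat \<Rightarrow> real" where
  "congestion W n = max 0 (2 * density W n - 1)"

end

theory Submission imports Defs begin

lemma travelled_0[simp]: "travelled \<sigma> v 0 = 0"
  by (simp add: travelled_def)

lemma travelled_Suc: "travelled \<sigma> v (Suc t) = travelled \<sigma> v t + (if \<sigma> v t then 1 else 0)"
proof -
  have "{s. s < Suc t \<and> \<sigma> v s} = {s. s < t \<and> \<sigma> v s} \<union> (if \<sigma> v t then {t} else {})"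
    using less_Suc_eq by auto
  moreover have "finite {s. s < t \<and> \<sigma> v s}" by simp
  ultimately show ?thesis unfolding travelled_def by (auto simp: card_insert_if)
qed

lemma travelled_le: "travelled \<sigma> v t \<le> t"
  unfolding travelled_def
  by (metis (no_types, lifting) card_lessThan card_mono finite_lessThan lessThan_iff mem_Collect_eq subsetI)

lemma travelled_ivt: "d \<le> travelled \<sigma> v t \<Longrightarrow> \<exists>s\<le>t. travelled \<sigma> v s = d"
proof (induction t arbitrary: d)
  case 0 then show ?case by simp
next
  case (Suc t)
  show ?case
  proof (cases "d \<le> travelled \<sigma> v t")
    case True then show ?thesis using Suc.IH by (meson le_SucI)
  next
    case False
    then have "d = travelled \<sigma> v (Suc t)" using Suc.prems travelled_Suc[of \<sigma> v t]
      by (auto split: if_splits)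
    then show ?thesis by blast
  qed
qed

lemma residue_count:
  fixes W :: nat and c p0 sg :: int
  assumes W: "W > 0" and c: "0 \<le> c" "c < int W" and sg: "sg = 1 \<or> sg = -1"
  shows "T div W \<le> card {d. d \<le> T \<and> (p0 + sg * int d) mod int W = c}"
proof -
  define r where "r = nat ((sg * (c - p0)) mod int W)"
  have rW: "r < W" using W unfolding r_def by (simp add: nat_less_iff)
  have ri: "int r = (sg * (c - p0)) mod int W" unfolding r_def using W by simp
  define f where "f k = r + k * W" for k
  have inj: "inj_on f {..<T div W}" unfolding f_def inj_on_def using W by simp
  have sub: "f ` {..<T div W} \<subseteq> {d. d \<le> T \<and> (p0 + sg * int d) mod int W = c}"
  proof
    fix x assume "x \<in> f ` {..<T div W}"
    then obtain k where k: "k < T div W" "x = r + k * W" unfolding f_def by auto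
    have "Suc k * W \<le> T div W * W" using k(1) by (meson Suc_leI mult_le_mono1)
    also have "\<dots> \<le> T" by simp
    finally have le: "x \<le> T" using k rW by simp
    have "(p0 + sg * int x) mod int W = (p0 + sg * int r) mod int W"
    proof -
      have "p0 + sg * int x = (p0 + sg * int r) + (sg * int k) * int W" using k by (simp add: algebra_simps)
      then show ?thesis by (metis add.commute mod_mult_self1 mult.commute)
    qed
    also have "\<dots> = (p0 + sg * (sg * (c - p0))) mod int W"
      unfolding ri by (metis mod_add_right_eq mod_mult_right_eq)
    also have "\<dots> = c" using sg c by auto
    finally show "x \<in> {d. d \<le> T \<and> (p0 + sg * int d) mod int W = c}" using le by simp
  qed
  have "card (f ` {..<T div W}) \<le> card {d. d \<le> T \<and> (p0 + sg * int d) mod int W = c}"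
    by (rule card_mono[OF _ sub]) auto
  then show ?thesis using card_image[OF inj] by simp
qed

lemma hit_count:
  fixes c sg :: int
  assumes W: "W > 0" and c: "0 \<le> c" "c < int W" and sg: "sg = 1 \<or> sg = -1"
    and eq: "\<And>d. (gridpt W I v d = P) \<longleftrightarrow> ((int (pos0 I v) + sg * int d) mod int W = c)"
  shows "travelled \<sigma> v t div W \<le> card {s. s \<le> t \<and> gridpt W I v (travelled \<sigma> v s) = P}"
proof -
  let ?T = "travelled \<sigma> v t"
  let ?S = "{s. s \<le> t \<and> gridpt W I v (travelled \<sigma> v s) = P}"
  have "{d. d \<le> ?T \<and> (int (pos0 I v) + sg * int d) mod int W = c} \<subseteq> travelled \<sigma> v ` ?S"
  proof
    fix d assume "d \<in> {d. d \<le> ?T \<and> (int (pos0 I v) + sg * int d) mod int W = c}"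
    then have d: "d \<le> ?T" "gridpt W I v d = P" using eq by auto
    obtain s where "s \<le> t" "travelled \<sigma> v s = d" using travelled_ivt[OF d(1)] by blast
    then show "d \<in> travelled \<sigma> v ` ?S" using d by auto
  qed
  then have "card {d. d \<le> ?T \<and> (int (pos0 I v) + sg * int d) mod int W = c} \<le> card (travelled \<sigma> v ` ?S)"
    by (intro card_mono) auto
  also have "\<dots> \<le> card ?S" by (intro card_image_le) auto
  finally show ?thesis using residue_count[OF W c sg, of ?T "int (pos0 I v)"] by linarith
qed

lemma finite_vehicles: "finite (vehicles mx my n)"
proof -
  have "{VL i | i. i < mx} = VL ` {..<mx}" "{HL j | j. j < my} = HL ` {..<my}" by auto
  then show ?thesis unfolding vehicles_def by simp
qed

lemma lane_sign_pm: "lane_sign I l = 1 \<or> lane_sign I l = -1"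
  unfolding lane_sign_def by (auto split: lane.splits)

lemma delay_bound:
  assumes "v \<in> vehicles mx my n"
  shows "t - travelled \<sigma> v t \<le> max_delay mx my n \<sigma> t"
  unfolding max_delay_def using assms finite_vehicles by (intro Max_ge) auto

lemma max_delay_le: "max_delay mx my n \<sigma> t \<le> t"
  unfolding max_delay_def using finite_vehicles by (subst Max_le_iff) auto

lemma count_bound:
  assumes W: "W > 0" and mx: "mx \<ge> 1" and my: "my \<ge> 1"
    and U: "uniform_instance W mx my n I" and cf: "collision_free W mx my n I \<sigma>"
  shows "2 * n * ((t - max_delay mx my n \<sigma> t) div W) \<le> t + 1"
proof -
  define V where "V = {VL 0, HL 0} \<times> {..<n}"
  define P where "P = (int (vx I 0), int (hy I 0))"
  define S where "S v = {s. s \<le> t \<and> gridpt W I v (travelled \<sigma> v s) = P}" for v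
  define D where "D = max_delay mx my n \<sigma> t"
  have Vsub: "V \<subseteq> vehicles mx my n" unfolding V_def vehicles_def using mx my by auto
  have finV: "finite V" unfolding V_def by simp
  have cardV: "card V = 2 * n" unfolding V_def by (simp add: card_cartesian_product)
  have hy0: "hy I 0 < W" and vx0: "vx I 0 < W" using U mx my unfolding uniform_instance_def by auto
  have each: "(t - D) div W \<le> card (S v)" if v: "v \<in> V" for v
  proof -
    have "v \<in> vehicles mx my n" using Vsub v by blast
    then have "t - travelled \<sigma> v t \<le> D" unfolding D_def by (rule delay_bound)
    then have "t - D \<le> travelled \<sigma> v t" using travelled_le[of \<sigma> v t] by linarith
    then have "(t - D) div W \<le> travelled \<sigma> v t div W" by (rule div_le_mono)
    also have "\<dots> \<le> card (S v)"
    proof -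
      obtain l k where vl: "v = (l, k)" "l = VL 0 \<or> l = HL 0" using v unfolding V_def by auto
      show ?thesis
      proof (cases "l = VL 0")
        case True
        show ?thesis unfolding S_def
        proof (rule hit_count[OF W _ _ lane_sign_pm[of I l], where c = "int (hy I 0)"])
          show "0 \<le> int (hy I 0)" "int (hy I 0) < int W" using hy0 by auto
          fix d
          have g: "gridpt W I v d = (int (vx I 0), (int (pos0 I v) + lane_sign I l * int d) mod int W)"
            unfolding gridpt_def Let_def using True vl by simp
          show "(gridpt W I v d = P) \<longleftrightarrow> ((int (pos0 I v) + lane_sign I l * int d) mod int W = int (hy I 0))"
            unfolding g P_def by simp
        qed
      next
        case False
        then have H: "l = HL 0" using vl by auto
        show ?thesis unfolding S_def
        proof (rule hit_count[OF W _ _ lane_sign_pm[of I l], where c = "int (vx I 0)"])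
          show "0 \<le> int (vx I 0)" "int (vx I 0) < int W" using vx0 by auto
          fix d
          have g: "gridpt W I v d = ((int (pos0 I v) + lane_sign I l * int d) mod int W, int (hy I 0))"
            unfolding gridpt_def Let_def using H vl by simp
          show "(gridpt W I v d = P) \<longleftrightarrow> ((int (pos0 I v) + lane_sign I l * int d) mod int W = int (vx I 0))"
            unfolding g P_def by auto
        qed
      qed
    qed
    finally show ?thesis .
  qed
  have "2 * n * ((t - D) div W) = (\<Sum>v\<in>V. (t - D) div W)" using cardV by simp
  also have "\<dots> \<le> (\<Sum>v\<in>V. card (S v))" by (intro sum_mono each)
  also have "\<dots> = card (\<Union>v\<in>V. S v)"
  proof (rule card_UN_disjoint[symmetric])
    show "finite V" by (rule finV)
    show "\<forall>v\<in>V. finite (S v)" unfolding S_def by auto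
    show "\<forall>v\<in>V. \<forall>w\<in>V. v \<noteq> w \<longrightarrow> S v \<inter> S w = {}"
    proof (intro ballI impI)
      fix v w assume vw: "v \<in> V" "w \<in> V" "v \<noteq> w"
      show "S v \<inter> S w = {}"
      proof (rule ccontr)
        assume "S v \<inter> S w \<noteq> {}"
        then obtain s where "gridpt W I v (travelled \<sigma> v s) = P" "gridpt W I w (travelled \<sigma> w s) = P"
          unfolding S_def by auto
        moreover have "inj_on (\<lambda>v. gridpt W I v (travelled \<sigma> v s)) (vehicles mx my n)"
          using cf unfolding collision_free_def by blast
        moreover have "v \<in> vehicles mx my n" "w \<in> vehicles mx my n" using vw Vsub by blast+
        ultimately have "v = w" by (auto dest: inj_onD)
        then show False using vw by simp
      qed
    qed
  qed
  also have "\<dots> \<le> card {..t}" unfolding S_def by (intro card_mono) auto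
  finally show ?thesis unfolding D_def by simp
qed

lemma limsup_lower:
  fixes f g :: "nat \<Rightarrow> real"
  assumes le: "\<And>t. t \<ge> 1 \<Longrightarrow> g t \<le> f t" and lim: "g \<longlonglongrightarrow> a"
  shows "ereal a \<le> limsup (\<lambda>t. ereal (f t))"
proof -
  have "limsup (\<lambda>t. ereal (g t)) = ereal a"
    by (rule lim_imp_Limsup) (auto intro: tendsto_ereal lim)
  moreover have "limsup (\<lambda>t. ereal (g t)) \<le> limsup (\<lambda>t. ereal (f t))"
    by (rule Limsup_mono) (auto simp: eventually_sequentially intro!: exI[of _ 1] le)
  ultimately show ?thesis by simp
qed

lemma rate_bound:
  assumes W: "W > 0" and mx: "mx \<ge> 1" and my: "my \<ge> 1"
    and U: "uniform_instance W mx my n I" and cf: "collision_free W mx my n I \<sigma>"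
  shows "ereal (congestion W n / (1 + congestion W n)) \<le> asym_delay_rate mx my n \<sigma>"
proof (cases "2 * n \<le> W")
  case True
  then have "congestion W n = 0" unfolding congestion_def density_def using W
    by (simp add: field_simps)
  then show ?thesis unfolding asym_delay_rate_def
    by (simp add: limsup_lower[where g = "\<lambda>_. 0"])
next
  case False
  define c where "c = real W / (2 * real n) + real W"
  define a where "a = 1 - real W / (2 * real n)"
  have n: "n > 0" using False by simp
  have cong: "congestion W n / (1 + congestion W n) = a"
  proof -
    have "congestion W n = 2 * real n / real W - 1"
      unfolding congestion_def density_def using False W by (simp add: field_simps)
    then have h: "1 + congestion W n = 2 * real n / real W" by simp
    have pos: "1 + congestion W n > 0" unfolding h using n W by simp
    have "congestion W n / (1 + congestion W n) = 1 - 1 / (1 + congestion W n)"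
      using pos by (simp add: field_simps)
    also have "\<dots> = a" unfolding h a_def by simp
    finally show ?thesis .
  qed
  have key: "a - c / real t \<le> real (max_delay mx my n \<sigma> t) / real t" if t: "t \<ge> 1" for t
  proof -
    define D where "D = max_delay mx my n \<sigma> t"
    define q where "q = (t - D) div W"
    have Dt: "D \<le> t" unfolding D_def by (rule max_delay_le)
    have cb: "2 * n * q \<le> t + 1" unfolding q_def D_def by (rule count_bound[OF W mx my U cf])
    then have cbr: "2 * real n * real q \<le> real t + 1"
      by (metis of_nat_le_iff of_nat_mult of_nat_add of_nat_1 of_nat_numeral)
    have e1: "t - D = W * q + (t - D) mod W" unfolding q_def by simp
    have e2: "(t - D) mod W < W" using W by simp
    have e3: "t - D < W * (q + 1)" using e1 e2 by (simp add: algebra_simps)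
    have e4: "real (t - D) < real (W * (q + 1))" using e3 by (simp only: of_nat_less_iff)
    have "real t - real D < real W * (real q + 1)" using e4 Dt by (simp add: of_nat_diff algebra_simps)
    moreover have "real W * real q \<le> real W * (real t + 1) / (2 * real n)"
    proof -
      have "real W * (2 * real n * real q) \<le> real W * (real t + 1)"
        using cbr by (intro mult_left_mono) auto
      then show ?thesis using n by (simp add: field_simps)
    qed
    ultimately have "real t - real D \<le> real W * (real t + 1) / (2 * real n) + real W"
      by (simp add: algebra_simps)
    moreover have "real t * a - c = real t - real W * (real t + 1) / (2 * real n) - real W"
      unfolding a_def c_def using n by (simp add: field_simps)
    ultimately have "real D \<ge> real t * a - c" by linarith
    then have "(real t * a - c) / real t \<le> real D / real t" by (intro divide_right_mono) auto
    moreover have "(real t * a - c) / real t = a - c / real t" using t by (simp add: field_simps)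
    ultimately show ?thesis unfolding D_def by simp
  qed
  have "(\<lambda>t. a - c / real t) \<longlonglongrightarrow> a - 0"
    by (intro tendsto_diff tendsto_const lim_const_over_n)
  then show ?thesis unfolding asym_delay_rate_def cong
    using limsup_lower[OF key] by simp
qed

theorem mainTheorem9:
  fixes W n mx my :: nat and I :: traffic_inst
  assumes "even W" and "W > 0" and "mx \<ge> 1" and "my \<ge> 1"
    and "uniform_instance W mx my n I"
  shows "ereal (congestion W n / (1 + congestion W n)) \<le> rho_opt W n mx my"
  unfolding rho_opt_def
proof (rule SUP_upper2[where i = I])
  show "I \<in> {I. uniform_instance W mx my n I}" using assms(5) by simp
  show "ereal (congestion W n / (1 + congestion W n))
    \<le> (INF \<sigma>\<in>{\<sigma>. collision_free W mx my n I \<sigma>}. asym_delay_rate mx my n \<sigma>)"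
    by (rule INF_greatest) (use rate_bound[OF assms(2,3,4,5)] in auto)
qed

end
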